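(* Let $q\ge 2$ be a prime power and let $\alpha,\beta$ be vertices of $\Gamma_q$ with $d_{\Gamma_q}(\alpha,\beta)=3$. Then $A=N^2_{\Gamma_q}[\alpha]\cup N^2_{\Gamma_q}[\beta]$ is a perfect dominating set of $\Gamma_q$ and $|A|=2(q+1)^2$.
   Context: Let $q\ge 2$ be a prime power and $\mathbb{F}_q$ the field with $q$ elements; in the vertex labels below the symbol $q$ is also used as an extra formal symbol not belonging to $\mathbb{F}_q$, and all arithmetic is in $\mathbb{F}_q$. $\Gamma_q$ is the bipartite graph with parts $V_0,V_1$, where for $r\in\{0,1\}$ the set $V_r$ consists of the vertices $(a,b,c)_r$ with $a\in\mathbb{F}_q\cup\{q\}$, $b,c\in\mathbb{F}_q$, together with the vertices $(q,q,a)_r$ with $a\in\mathbb{F}_q\cup\{q\}$. The edges are given by: for $a,b,c\in\mathbb{F}_q$, $N((a,b,c)_1)=\{(x,\,ax+b,\,a^2x+2ab+c)_0: x\in\mathbb{F}_q\}\cup\{(q,a,c)_0\}$; for $b,c\in\mathbb{F}_q$, $N((q,b,c)_1)=\{(c,b,x)_0: x\in\mathbb{F}_q\}\cup\{(q,q,c)_0\}$; for $a\in\mathbb{F}_q\cup\{q\}$, $N((q,q,a)_1)=\{(q,a,x)_0: x\in\mathbb{F}_q\}\cup\{(q,q,q)_0\}$. There are no other edges. For a graph $G$, $d_G$ is the distance, $N^t_G(u)=\{x: d_G(u,x)=t\}$, $N^t_G[u]=\{x: d_G(u,x)\le t\}$, $N_G[u]=N^1_G[u]$. A set $U\subseteq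 V(G)$ is a perfect dominating set of $G$ if every vertex $x\in V(G)\setminus U$ has exactly one neighbour in $U$. *)

theory Defs
  imports Main "HOL-Library.Extended_Nat"
begin

inductive walk :: "'v set \<Rightarrow> ('v \<Rightarrow> 'v \<Rightarrow> bool) \<Rightarrow> nat \<Rightarrow> 'v \<Rightarrow> 'v \<Rightarrow> bool"
  for V E where
  walk0: "u \<in> V \<Longrightarrow> walk V E 0 u u"
| walkS: "walk V E n u v \<Longrightarrow> w \<in> V \<Longrightarrow> E v w \<Longrightarrow> walk V E (Suc n) u w"

text \<open>Graph distance (infinity if no walk exists).\<close>
definition gdist :: "'v set \<Rightarrow> ('v \<Rightarrow> 'v \<Rightarrow> bool) \<Rightarrow> 'v \<Rightarrow> 'v \<Rightarrow> enat" where
  "gdist V E u x = (INF n \<in> {n. walk V E n u x}. enat n)"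

definition closed_nbhd :: "'v set \<Rightarrow> ('v \<Rightarrow> 'v \<Rightarrow> bool) \<Rightarrow> nat \<Rightarrow> 'v \<Rightarrow> 'v set" where
  "closed_nbhd V E t u = {x \<in> V. gdist V E u x \<le> enat t}"

definition perfect_dominating :: "'v set \<Rightarrow> ('v \<Rightarrow> 'v \<Rightarrow> bool) \<Rightarrow> 'v set \<Rightarrow> bool" where
  "perfect_dominating V E U \<longleftrightarrow> U \<subseteq> V \<and> (\<forall>x \<in> V - U. card {y \<in> U. E x y} = 1)"

text \<open>Labels (a,b,c): each coordinate is in F_q \<union> {q}; None encodes the formal symbol q.\<close>
type_synonym 'a label = "'a option \<times> 'a option \<times> 'a option"

text \<open>A vertex is a label together with its side r (False = V_0, True = V_1).\<close>
type_synonym 'a gvertex = "'a label \<times> bool"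

definition labels :: "('a::{finite,field}) label set" where
  "labels = {(a, Some b, Some c) | a b c. True} \<union> {(None, None, a) | a. True}"

definition gverts :: "('a::{finite,field}) gvertex set" where
  "gverts = labels \<times> UNIV"

text \<open>Neighbourhood (in V_0) of a vertex of V_1, given by its label.\<close>
definition N1 :: "('a::{finite,field}) label \<Rightarrow> 'a label set" where
  "N1 v = (case v of
      (Some a, Some b, Some c) \<Rightarrow>
         {(Some x, Some (a * x + b), Some (a^2 * x + 2 * a * b + c)) | x. True} \<union> {(None, Some a, Some c)}
    | (None, Some b, Some c) \<Rightarrow> {(Some c, Some b, Some x) | x. True} \<union> {(None, None, Some c)}
    | (None, None, a) \<Rightarrow> {(None, a, Some x) | x. True} \<union> {(None, None, None)}
    | _ \<Rightarrow> {})"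

definition gadj :: "('a::{finite,field}) gvertex \<Rightarrow> 'a gvertex \<Rightarrow> bool" where
  "gadj u v \<longleftrightarrow> u \<in> gverts \<and> v \<in> gverts \<and>
     ((snd u \<and> \<not> snd v \<and> fst v \<in> N1 (fst u)) \<or> (snd v \<and> \<not> snd u \<and> fst u \<in> N1 (fst v)))"

end

theory Submission
  imports Defs
begin


lemma gdist_le_iff: "gdist V E u x \<le> enat t \<longleftrightarrow> (\<exists>n\<le>t. walk V E n u x)"
proof
  assume "\<exists>n\<le>t. walk V E n u x"
  then obtain n where "n \<le> t" "walk V E n u x" by blast
  then have "gdist V E u x \<le> enat n" unfolding gdist_def by (auto intro: INF_lower)
  also have "\<dots> \<le> enat t" using \<open>n \<le> t\<close> by simp
  finally show "gdist V E u x \<le> enat t" .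
next
  assume h: "gdist V E u x \<le> enat t"
  show "\<exists>n\<le>t. walk V E n u x"
  proof (rule ccontr)
    assume "\<not> (\<exists>n\<le>t. walk V E n u x)"
    then have "\<forall>n \<in> {n. walk V E n u x}. enat (Suc t) \<le> enat n" using not_less_eq_eq by auto
    then have "enat (Suc t) \<le> gdist V E u x" unfolding gdist_def by (auto intro!: INF_greatest)
    then have "enat (Suc t) \<le> enat t" using h by (rule order_trans)
    then show False by simp
  qed
qed

lemma ex1_pairE: assumes "\<exists>!p. P (fst p) (snd p)"
  obtains a b where "P a b" "\<And>c d. P c d \<Longrightarrow> c = a \<and> d = b"
proof -
  obtain p where p: "P (fst p) (snd p)" "\<And>q. P (fst q) (snd q) \<Longrightarrow> q = p" using assms by blast
  have "\<And>c d. P c d \<Longrightarrow> c = fst p \<and> d = snd p"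
  proof -
    fix c d assume "P c d"
    then have "(c, d) = p" using p(2)[of "(c,d)"] by simp
    then show "c = fst p \<and> d = snd p" by auto
  qed
  then show ?thesis using that p(1) by blast
qed

lemma tri: "(p::bool) \<noteq> q \<Longrightarrow> q \<noteq> r \<Longrightarrow> p \<noteq> r \<Longrightarrow> False" by auto

locale gq =
  fixes V :: "'v set" and E :: "'v \<Rightarrow> 'v \<Rightarrow> bool" and side :: "'v \<Rightarrow> bool" and k :: nat
  assumes fin: "finite V"
  and E_V: "E u v \<Longrightarrow> u \<in> V \<and> v \<in> V"
  and sym: "E u v \<Longrightarrow> E v u"
  and bip: "E u v \<Longrightarrow> side u \<noteq> side v"
  and deg: "u \<in> V \<Longrightarrow> card {v. E u v} = Suc k"
  and A1: "E u w1 \<Longrightarrow> E w1 v \<Longrightarrow> E u w2 \<Longrightarrow> E w2 v \<Longrightarrow> u \<noteq> v \<Longrightarrow> w1 = w2"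
  and A2: "u \<in> V \<Longrightarrow> v \<in> V \<Longrightarrow> side u \<noteq> side v \<Longrightarrow> \<not> E u v \<Longrightarrow>
       \<exists>!p. E u (fst p) \<and> E (fst p) (snd p) \<and> E (snd p) v"
begin

definition N2 where "N2 u = {u} \<union> {x. E u x} \<union> {x. \<exists>w. E u w \<and> E w x}"

lemma walk0: "walk V E 0 u v \<longleftrightarrow> u = v \<and> u \<in> V"
  by (auto elim: walk.cases intro: walk.intros)

lemma walkS: "walk V E (Suc n) u w \<longleftrightarrow> (\<exists>v. walk V E n u v \<and> E v w)"
  by (auto elim: walk.cases intro: walk.intros dest: E_V)

lemma walk_le2: "u \<in> V \<Longrightarrow> (\<exists>n\<le>2. walk V E n u x) \<longleftrightarrow> x \<in> N2 u"
proof -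
  assume u: "u \<in> V"
  have "(\<exists>n\<le>2. walk V E n u x) \<longleftrightarrow> walk V E 0 u x \<or> walk V E 1 u x \<or> walk V E 2 u x"
    by (auto simp: le_Suc_eq numeral_2_eq_2)
  also have "\<dots> \<longleftrightarrow> x \<in> N2 u"
    using u by (auto simp: N2_def numeral_2_eq_2 walkS walk0)
  finally show ?thesis .
qed

lemma nbhd2: "u \<in> V \<Longrightarrow> closed_nbhd V E 2 u = N2 u"
  using walk_le2[of u] E_V unfolding closed_nbhd_def gdist_le_iff
  by (auto simp: N2_def)

lemma side2: "E u w \<Longrightarrow> E w x \<Longrightarrow> side x = side u"
  using bip by blast

lemma finN: "finite {v. E u v}"
  by (rule finite_subset[OF _ fin]) (auto dest: E_V)

lemma card_N2: assumes u: "u \<in> V" shows "card (N2 u) = Suc (Suc k + Suc k * k)"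
proof -
  let ?N = "{x. E u x}"
  let ?M = "\<Union>w\<in>?N. {x. E w x} - {u}"
  have eq: "N2 u = insert u (?N \<union> ?M)"
    unfolding N2_def by auto
  have uN: "u \<notin> ?N" using bip by blast
  have uM: "u \<notin> ?M" by blast
  have disj: "?N \<inter> ?M = {}" using side2 bip by blast
  have finM: "finite ?M" using finN by auto
  have cM: "card ?M = Suc k * k"
  proof -
    have "card ?M = (\<Sum>w\<in>?N. card ({x. E w x} - {u}))"
    proof (rule card_UN_disjoint)
      show "\<forall>i\<in>?N. \<forall>j\<in>?N. i \<noteq> j \<longrightarrow> ({x. E i x} - {u}) \<inter> ({x. E j x} - {u}) = {}"
      proof (intro ballI impI)
        fix i j assume ij: "i \<in> ?N" "j \<in> ?N" "i \<noteq> j"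
        show "({x. E i x} - {u}) \<inter> ({x. E j x} - {u}) = {}"
        proof (rule ccontr)
          assume "({x. E i x} - {u}) \<inter> ({x. E j x} - {u}) \<noteq> {}"
          then obtain x where "E i x" "E j x" "x \<noteq> u" by blast
          then have "i = j" using A1[of u i x j] ij by blast
          then show False using ij by blast
        qed
      qed
    qed (use finN in auto)
    also have "\<dots> = (\<Sum>w\<in>?N. k)"
    proof (rule sum.cong)
      fix w assume "w \<in> ?N"
      then have "E w u" "w \<in> V" using sym E_V by auto
      then show "card ({x. E w x} - {u}) = k" using deg finN by (simp add: card_Diff_singleton)
    qed simp
    also have "\<dots> = Suc k * k" using deg[OF u] by simp
    finally show ?thesis .
  qed
  show ?thesis unfolding eq using uN uM disj finN finM cM deg[OF u]
    by (simp add: card_Un_disjoint)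
qed

lemma finN2: "finite (N2 u)"
proof -
  have "N2 u \<subseteq> insert u V" unfolding N2_def by (auto dest: E_V)
  then show ?thesis using fin finite_subset by blast
qed

lemma dom:
  assumes a: "a \<in> V" and b: "b \<in> V" and sab: "side a \<noteq> side b"
    and nab: "\<not> E a b" and z: "z \<in> V" and za: "z \<notin> N2 a" and zb: "z \<notin> N2 b"
    and sz: "side z = side a"
  shows "card {w \<in> N2 a \<union> N2 b. E z w} = 1"
proof -
  have nzb: "\<not> E z b" using zb sym unfolding N2_def by blast
  have "side z \<noteq> side b" using sz sab by simp
  from ex1_pairE[OF A2[OF z b this nzb]] obtain w m where wm: "E z w \<and> E w m \<and> E m b"
    and uq0: "\<And>w' m'. E z w' \<and> E w' m' \<and> E m' b \<Longrightarrow> w' = w \<and> m' = m"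
    by blast
  have uq: "\<And>w' m'. E z w' \<Longrightarrow> E w' m' \<Longrightarrow> E m' b \<Longrightarrow> w' = w" using uq0 by blast
  have "{w \<in> N2 a \<union> N2 b. E z w} = {w}"
  proof (rule set_eqI, rule iffI)
    fix w' assume "w' \<in> {w \<in> N2 a \<union> N2 b. E z w}"
    then have w': "w' \<in> N2 a \<union> N2 b" "E z w'" by auto
    show "w' \<in> {w}"
    proof -
      have "w' \<notin> N2 a"
      proof
        assume "w' \<in> N2 a"
        then consider "w' = a" | "E a w'" | v where "E a v" "E v w'" unfolding N2_def by blast
        then show False
        proof cases
          case 1 then show ?thesis using w'(2) za sym unfolding N2_def by blast
        next
          case 2 then show ?thesis using w'(2) za sym unfolding N2_def by blast
        next
          case 3 then have "side w' = side a" using side2 by blast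
          then show ?thesis using w'(2) sz bip by simp
        qed
      qed
      then have "w' \<in> N2 b" using w' by auto
      then consider "w' = b" | "E b w'" | m' where "E b m'" "E m' w'" unfolding N2_def by blast
      then show ?thesis
      proof cases
        case 1 then show ?thesis using w'(2) nzb by blast
      next
        case 2 then have "side w' \<noteq> side b" "side z \<noteq> side w'" using w'(2) bip by auto
          then show ?thesis using sz sab tri by blast
      next
        case 3 then show ?thesis using w'(2) uq sym by blast
      qed
    qed
  next
    fix w' assume "w' \<in> {w}"
    then show "w' \<in> {w \<in> N2 a \<union> N2 b. E z w}" using wm sym unfolding N2_def by (auto intro: sym)
  qed
  then show ?thesis by simp
qed

theorem main:
  assumes a: "\<alpha> \<in> V" and b: "\<beta> \<in> V" and d: "gdist V E \<alpha> \<beta> = 3"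
  shows "perfect_dominating V E (closed_nbhd V E 2 \<alpha> \<union> closed_nbhd V E 2 \<beta>)
       \<and> card (closed_nbhd V E 2 \<alpha> \<union> closed_nbhd V E 2 \<beta>) = 2 * (Suc k)^2"
proof -
  have "gdist V E \<alpha> \<beta> \<le> enat 3" using d by (simp add: numeral_eq_enat)
  then obtain n where n: "n \<le> 3" "walk V E n \<alpha> \<beta>" unfolding gdist_le_iff by blast
  have "\<not> gdist V E \<alpha> \<beta> \<le> enat 2" using d by (simp add: numeral_eq_enat)
  then have nb: "\<beta> \<notin> N2 \<alpha>" unfolding gdist_le_iff walk_le2[OF a] .
  have "\<not> n \<le> 2" using n(2) nb walk_le2[OF a] by blast
  then have "n = 3" using n(1) by simp
  then obtain x y where xy: "E \<alpha> x" "E x y" "E y \<beta>" using n(2)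
    by (auto simp: numeral_3_eq_3 walkS walk0)
  have nab: "\<not> E \<alpha> \<beta>" using nb unfolding N2_def by auto
  have sab: "side \<alpha> \<noteq> side \<beta>"
  proof -
    have "side \<alpha> \<noteq> side x" "side x \<noteq> side y" "side y \<noteq> side \<beta>" using xy bip by auto
    then show ?thesis by (cases "side \<alpha>"; cases "side x"; cases "side y"; simp)
  qed
  from ex1_pairE[OF A2[OF a b sab nab]] obtain x' y' where "E \<alpha> x' \<and> E x' y' \<and> E y' \<beta>"
    and uq0: "\<And>w m. E \<alpha> w \<and> E w m \<and> E m \<beta> \<Longrightarrow> w = x' \<and> m = y'" by blast
  have uq: "\<And>w m. E \<alpha> w \<Longrightarrow> E w m \<Longrightarrow> E m \<beta> \<Longrightarrow> w = x \<and> m = y"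
    using uq0[of x y] uq0 xy by blast
  have int: "N2 \<alpha> \<inter> N2 \<beta> = {x, y}"
  proof (rule set_eqI, rule iffI)
    fix z assume "z \<in> N2 \<alpha> \<inter> N2 \<beta>"
    then have z: "z \<in> N2 \<alpha>" "z \<in> N2 \<beta>" by auto
    show "z \<in> {x, y}"
    proof -
      consider "z = \<alpha>" | "E \<alpha> z" | w where "E \<alpha> w" "E w z" using z(1) unfolding N2_def by blast
      then show ?thesis
      proof cases
        case 1 then show ?thesis using z(2) nb sym unfolding N2_def by blast
      next
        case 2
        consider "z = \<beta>" | "E \<beta> z" | m where "E \<beta> m" "E m z" using z(2) unfolding N2_def by blast
        then show ?thesis
        proof cases
          case 1 then show ?thesis using 2 nab by blast
        next
          case 3 then show ?thesis using 2 uq sym by blast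
        next
          case b2: 2
          then have "side z \<noteq> side \<beta>" "side \<alpha> \<noteq> side z" using 2 b2 bip by auto
          then show ?thesis using sab tri by blast
        qed
      next
        case 3
        consider "z = \<beta>" | "E \<beta> z" | m where "E \<beta> m" "E m z" using z(2) unfolding N2_def by blast
        then show ?thesis
        proof cases
          case 1 then show ?thesis using 3 nb unfolding N2_def by blast
        next
          case 2 then show ?thesis using 3 uq sym by blast
        next
          case m: 3 then have "side z = side \<alpha>" "side z = side \<beta>" using 3 side2 by blast+
          then show ?thesis using sab by simp
        qed
      qed
    qed
  next
    fix z assume "z \<in> {x, y}"
    then show "z \<in> N2 \<alpha> \<inter> N2 \<beta>" using xy sym unfolding N2_def by (auto intro: sym)
  qed
  have xy_ne: "x \<noteq> y" using bip[OF xy(2)] by auto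
  have cU: "card (N2 \<alpha> \<union> N2 \<beta>) = 2 * (Suc k)^2"
  proof -
    have "card (N2 \<alpha> \<union> N2 \<beta>) + card (N2 \<alpha> \<inter> N2 \<beta>) = card (N2 \<alpha>) + card (N2 \<beta>)"
      using card_Un_Int[OF finN2[of \<alpha>] finN2[of \<beta>]] by linarith
    moreover have "card (N2 \<alpha> \<inter> N2 \<beta>) = 2" using xy_ne int by simp
    moreover have "(Suc k)^2 = Suc k + Suc k * k" by (simp add: power2_eq_square)
    ultimately show ?thesis using card_N2[OF a] card_N2[OF b] by linarith
  qed
  have pd: "perfect_dominating V E (N2 \<alpha> \<union> N2 \<beta>)"
    unfolding perfect_dominating_def
  proof
    show "N2 \<alpha> \<union> N2 \<beta> \<subseteq> V" using a b unfolding N2_def by (auto dest: E_V)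
    show "\<forall>z\<in>V - (N2 \<alpha> \<union> N2 \<beta>). card {y \<in> N2 \<alpha> \<union> N2 \<beta>. E z y} = 1"
    proof
      fix z assume "z \<in> V - (N2 \<alpha> \<union> N2 \<beta>)"
      then have z: "z \<in> V" "z \<notin> N2 \<alpha>" "z \<notin> N2 \<beta>" by auto
      show "card {y \<in> N2 \<alpha> \<union> N2 \<beta>. E z y} = 1"
      proof (cases "side z = side \<alpha>")
        case True
        then show ?thesis using dom[OF a b sab nab z] by simp
      next
        case False
        then have "side z = side \<beta>" using sab by auto
        moreover have "\<not> E \<beta> \<alpha>" using nab sym by blast
        ultimately show ?thesis using dom[OF b a _ _ z(1) z(3) z(2)] sab
          by (simp add: Un_commute)
      qed
    qed
  qed
  show ?thesis using pd cU nbhd2[OF a] nbhd2[OF b] by simp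
qed

end



lemma labels_iff: "l \<in> labels \<longleftrightarrow> (\<exists>x y z. l = (Some x, Some y, Some z)) \<or> (\<exists>y z. l = (None, Some y, Some z))
   \<or> (\<exists>z. l = (None, None, Some z)) \<or> l = (None, None, None)"
  unfolding labels_def by (cases l) auto

lemma labels_cases[consumes 1, case_names P Q R Rinf]:
  assumes "l \<in> labels"
  obtains x y z where "l = (Some x, Some y, Some z)" | y z where "l = (None, Some y, Some z)"
    | z where "l = (None, None, Some z)" | "l = (None, None, None)"
  using assms unfolding labels_iff by blast

lemma N1_L: "N1 (Some a, Some b, Some c) = range (\<lambda>x. (Some x, Some (a*x+b), Some (a^2*x+2*a*b+c))) \<union> {(None, Some a, Some c)}"
  by (auto simp: N1_def)
lemma N1_M: "N1 (None, Some b, Some c) = range (\<lambda>x. (Some c, Some b, Some x)) \<union> {(None, None, Some c)}"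
  by (auto simp: N1_def)
lemma N1_K: "N1 (None, None, Some a) = range (\<lambda>x. (None, Some a, Some x)) \<union> {(None, None, None)}"
  by (auto simp: N1_def)
lemma N1_Kinf: "N1 (None, None, None) = range (\<lambda>x. (None, None, Some x)) \<union> {(None, None, None)}"
  by (auto simp: N1_def)

lemma card_range_plus:
  fixes f :: "'a::finite \<Rightarrow> 'b"
  assumes "inj f" "s \<notin> range f"
  shows "card (range f \<union> {s}) = Suc (card (UNIV::'a set))"
  using assms by (simp add: card_image)

lemma card_N1: fixes l :: "('a::{finite,field}) label" assumes "l \<in> labels" shows "card (N1 l) = Suc (card (UNIV::'a::{finite,field} set))"
  using assms
proof (cases rule: labels_cases)
  case (P x y z) show ?thesis unfolding P N1_L by (intro card_range_plus) (auto simp: inj_def)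
next
  case (Q y z) show ?thesis unfolding Q N1_M by (intro card_range_plus) (auto simp: inj_def)
next
  case (R z) show ?thesis unfolding R N1_K by (intro card_range_plus) (auto simp: inj_def)
next
  case Rinf show ?thesis unfolding Rinf N1_Kinf by (intro card_range_plus) (auto simp: inj_def)
qed

lemma N1_sub: "l \<in> labels \<Longrightarrow> N1 (l::('a::{finite,field}) label) \<subseteq> labels"
  by (erule labels_cases) (auto simp: N1_def labels_def)

definition LT :: "('a::{finite,field}) label \<Rightarrow> 'a label set" where
  "LT p = {l \<in> labels. p \<in> N1 l}"

lemma LT_P: "LT (Some x, Some y, Some z) =
   range (\<lambda>a. (Some a, Some (y - a*x), Some (z + a^2*x - 2*a*y))) \<union> {(None, Some y, Some (x::'a::{finite,field}))}"
proof (rule set_eqI, rule iffI)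
  fix l assume "l \<in> LT (Some x, Some y, Some z)"
  then have l: "l \<in> labels" "(Some x, Some y, Some z) \<in> N1 l" unfolding LT_def by auto
  from l(1) show "l \<in> range (\<lambda>a. (Some a, Some (y - a*x), Some (z + a^2*x - 2*a*y))) \<union> {(None, Some y, Some x)}"
  proof (cases rule: labels_cases)
    case (P a b c)
    then have "y = a*x+b" "z = a^2*x+2*a*b+c" using l(2) by (auto simp: N1_def)
    then have "b = y - a*x" "c = z + a^2*x - 2*a*y" by (auto simp: algebra_simps power2_eq_square)
    then show ?thesis using P by auto
  qed (use l(2) in \<open>auto simp: N1_def\<close>)
next
  fix l assume "l \<in> range (\<lambda>a. (Some a, Some (y - a*x), Some (z + a^2*x - 2*a*y))) \<union> {(None, Some y, Some x)}"
  then show "l \<in> LT (Some x, Some y, Some z)" unfolding LT_def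
    by (auto simp: N1_def labels_def algebra_simps power2_eq_square)
qed

lemma LT_Q: "LT (None, Some y, Some z) = range (\<lambda>b. (Some y, Some b, Some z)) \<union> {(None, None, Some (y::'a::{finite,field}))}"
  unfolding LT_def by (auto simp: N1_def labels_def split: option.splits)
lemma LT_R: "LT (None, None, Some z) = range (\<lambda>b. (None, Some b, Some z)) \<union> {(None, None, None::'a::{finite,field} option)}"
  unfolding LT_def by (auto simp: N1_def labels_def split: option.splits)
lemma LT_Rinf: "LT (None, None, None) = range (\<lambda>a. (None, None, Some a)) \<union> {(None, None, None::'a::{finite,field} option)}"
  unfolding LT_def apply (auto simp: N1_def labels_def split: option.splits)
  apply (case_tac ab) apply auto done

lemma card_LT: fixes p :: "('a::{finite,field}) label" assumes "p \<in> labels" shows "card (LT p) = Suc (card (UNIV::'a::{finite,field} set))"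
  using assms
proof (cases rule: labels_cases)
  case (P x y z) show ?thesis unfolding P LT_P by (intro card_range_plus) (auto simp: inj_def)
next
  case (Q y z) show ?thesis unfolding Q LT_Q by (intro card_range_plus) (auto simp: inj_def)
next
  case (R z) show ?thesis unfolding R LT_R by (intro card_range_plus) (auto simp: inj_def)
next
  case Rinf show ?thesis unfolding Rinf LT_Rinf by (intro card_range_plus) (auto simp: inj_def)
qed


lemma card_option_UNIV: "card (UNIV :: ('a::finite) option set) = Suc (card (UNIV :: 'a set))"
proof -
  have "card (UNIV :: 'a option set) = card (insert None (range (Some :: 'a \<Rightarrow> _)))"
    by (simp only: UNIV_option_conv)
  also have "\<dots> = Suc (card (range (Some :: 'a \<Rightarrow> _)))"
    by (rule card_insert_disjoint) auto
  also have "card (range (Some :: 'a \<Rightarrow> _)) = card (UNIV :: 'a set)"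
    by (rule card_image) simp
  finally show ?thesis .
qed

lemma card_labels: "card (labels :: ('a::{finite,field}) label set) =
   Suc (card (UNIV::'a set)) * (card (UNIV::'a set) * card (UNIV::'a set)) + Suc (card (UNIV::'a set))"
proof -
  let ?A = "(\<lambda>(a,b,c). (a, Some b, Some c)) ` ((UNIV :: 'a option set) \<times> (UNIV :: 'a set) \<times> (UNIV :: 'a set))"
  let ?B = "(\<lambda>a. (None, None, a)) ` (UNIV :: 'a option set)"
  have eq: "(labels :: 'a label set) = ?A \<union> ?B"
  proof (rule set_eqI, rule iffI)
    fix l :: "'a label" assume "l \<in> labels"
    then show "l \<in> ?A \<union> ?B"
    proof (cases rule: labels_cases)
      case (P x y z) then show ?thesis by (auto intro!: image_eqI[of _ _ "(Some x, y, z)"])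
    next
      case (Q y z) then show ?thesis by (auto intro!: image_eqI[of _ _ "(None, y, z)"])
    qed auto
  next
    fix l assume "l \<in> ?A \<union> ?B" then show "l \<in> labels" unfolding labels_def by auto
  qed
  have "card ?A = card ((UNIV :: 'a option set) \<times> (UNIV :: 'a set) \<times> (UNIV :: 'a set))"
    by (rule card_image) (auto simp: inj_on_def)
  also have "\<dots> = Suc (card (UNIV::'a set)) * (card (UNIV::'a set) * card (UNIV::'a set))"
    by (simp only: card_cartesian_product card_option_UNIV)
  finally have cA: "card ?A = \<dots>" .
  have cB: "card ?B = Suc (card (UNIV::'a set))"
    by (subst card_image) (auto simp: inj_on_def card_option_UNIV)
  have "?A \<inter> ?B = {}" by auto
  then show ?thesis unfolding eq using cA cB by (simp add: card_Un_disjoint)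
qed

lemma LL_meet:
  fixes a b c a' b' c' :: "'a::{finite,field}"
  assumes ne: "(a, b, c) \<noteq> (a', b', c')"
    and p1: "p1 \<in> N1 (Some a, Some b, Some c)" "p1 \<in> N1 (Some a', Some b', Some c')"
    and p2: "p2 \<in> N1 (Some a, Some b, Some c)" "p2 \<in> N1 (Some a', Some b', Some c')"
  shows "p1 = p2"
proof (cases "a = a'")
  case True
  have noP: False if h: "p \<in> N1 (Some a, Some b, Some c)" "p \<in> N1 (Some a', Some b', Some c')"
      "p \<noteq> (None, Some a, Some c)" for p
  proof -
    obtain x where x: "p = (Some x, Some (a*x+b), Some (a^2*x+2*a*b+c))" using h(1,3) unfolding N1_L by auto
    have "a*x+b = a'*x+b'" "a^2*x+2*a*b+c = a'^2*x+2*a'*b'+c'"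
      using h(2) x unfolding N1_L by auto
    then have "b = b'" "c = c'" using True by auto
    then show False using ne True by simp
  qed
  then show ?thesis using p1 p2 by blast
next
  case False
  have isP: "\<exists>x. p = (Some x, Some (a*x+b), Some (a^2*x+2*a*b+c)) \<and> (a - a') * x = b' - b"
    if h: "p \<in> N1 (Some a, Some b, Some c)" "p \<in> N1 (Some a', Some b', Some c')" for p
  proof -
    have "p \<noteq> (None, Some a, Some c)" using h(2) False unfolding N1_L by auto
    then obtain x where x: "p = (Some x, Some (a*x+b), Some (a^2*x+2*a*b+c))" using h(1) unfolding N1_L by auto
    have "a*x+b = a'*x+b'" using h(2) x unfolding N1_L by auto
    then have "(a - a') * x = b' - b" by (simp add: algebra_simps)
    then show ?thesis using x by blast
  qed
  obtain x1 where x1: "p1 = (Some x1, Some (a*x1+b), Some (a^2*x1+2*a*b+c))" "(a - a') * x1 = b' - b"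
    using isP p1 by blast
  obtain x2 where x2: "p2 = (Some x2, Some (a*x2+b), Some (a^2*x2+2*a*b+c))" "(a - a') * x2 = b' - b"
    using isP p2 by blast
  have "x1 = x2" using x1(2) x2(2) False by (metis mult_left_cancel right_minus_eq)
  then show ?thesis using x1 x2 by simp
qed

lemma lines_meet:
  fixes l1 l2 :: "('a::{finite,field}) label"
  assumes l: "l1 \<in> labels" "l2 \<in> labels" "l1 \<noteq> l2"
    and p: "p1 \<in> N1 l1" "p1 \<in> N1 l2" "p2 \<in> N1 l1" "p2 \<in> N1 l2"
  shows "p1 = p2"
  using l(1)
proof (cases rule: labels_cases)
  case (P a b c)
  from l(2) show ?thesis
  proof (cases rule: labels_cases)
    case (P a' b' c')
    show ?thesis by (rule LL_meet[of a b c a' b' c']) (use l p \<open>l1 = _\<close> P in auto)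
  qed (use p P in \<open>auto simp: N1_L N1_M N1_K N1_Kinf\<close>)
next
  case (Q y z)
  from l(2) show ?thesis by (cases rule: labels_cases) (use p Q l in \<open>auto simp: N1_L N1_M N1_K N1_Kinf\<close>)
next
  case (R z)
  from l(2) show ?thesis by (cases rule: labels_cases) (use p R l in \<open>auto simp: N1_L N1_M N1_K N1_Kinf\<close>)
next
  case Rinf
  from l(2) show ?thesis by (cases rule: labels_cases) (use p Rinf l in \<open>auto simp: N1_L N1_M N1_K N1_Kinf\<close>)
qed


lemma wit: "m \<in> labels \<Longrightarrow> p \<in> N1 m \<Longrightarrow> p' \<in> N1 m \<Longrightarrow> p' \<in> N1 l \<Longrightarrow>
   \<exists>m p'. m \<in> labels \<and> p \<in> N1 m \<and> p' \<in> N1 m \<and> p' \<in> N1 l"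
  by blast

lemma onP: "(Some x, Some y, Some z) \<in> N1 (Some a, Some (y - a*x), Some (z + a^2*x - 2*a*(y::'a::{finite,field})))"
  using LT_P[of x y z] unfolding LT_def by blast

lemma labP: "(Some a, Some b, Some c) \<in> labels" "(None, Some b, Some c) \<in> labels"
  "(None, None, d) \<in> labels"
  unfolding labels_def by auto

lemma alg_iii:
  fixes a a' s x y z b c :: "'a::field"
  assumes "(a' - a)*s = a*x+b-y" "(a'+a)*(a*x+b-y) = a^2*x+2*a*b+c-z"
  shows "a*(x+s)+b = a'*(x+s) + (y - a'*x)"
    "a^2*(x+s)+2*a*b+c = a'^2*(x+s) + 2*a'*(y-a'*x) + (z + a'^2*x - 2*a'*y)"
  using assms by algebra+

lemma exist_PL:
  fixes x y z a b c :: "'a::{finite,field}"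
  assumes np: "(Some x, Some y, Some z) \<notin> N1 (Some a, Some b, Some c)"
  shows "\<exists>m p'. m \<in> labels \<and> (Some x, Some y, Some z) \<in> N1 m \<and> p' \<in> N1 m \<and> p' \<in> N1 (Some a, Some b, Some c)"
proof -
  define D1 where "D1 = a*x+b-y"
  define D2 where "D2 = a^2*x+2*a*b+c-z"
  show ?thesis
  proof (cases "D1 = 0")
    case True
    then have "y = a*x+b" unfolding D1_def by simp
    then show ?thesis
      by (intro wit[of "(None, Some y, Some x)" _ "(Some x, Some y, Some (a^2*x+2*a*b+c))"])
        (auto simp: labP N1_def)
  next
    case False
    show ?thesis
    proof (cases "D2 = 2*a*D1")
      case True
      then have "c = z+a^2*x-2*a*y" unfolding D1_def D2_def by algebra
      then show ?thesis
        by (intro wit[of "(Some a, Some (y-a*x), Some (z+a^2*x-2*a*y))" _ "(None, Some a, Some c)"])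
          (rule labP, rule onP, auto simp: N1_def)
    next
      case F2: False
      define e where "e = D2 - 2*a*D1"
      have e: "e \<noteq> 0" using F2 unfolding e_def by simp
      define a' where "a' = a + e/D1"
      define s where "s = D1^2/e"
      have h1: "(a' - a)*s = a*x+b-y" unfolding a'_def s_def D1_def[symmetric] using e False
        by (simp add: field_simps power2_eq_square)
      have h2: "(a'+a)*(a*x+b-y) = a^2*x+2*a*b+c-z" unfolding a'_def D1_def[symmetric] D2_def[symmetric]
        using False by (simp add: e_def field_simps)
      note q = alg_iii[OF h1 h2]
      show ?thesis
        by (intro wit[of "(Some a', Some (y-a'*x), Some (z+a'^2*x-2*a'*y))" _
             "(Some (x+s), Some (a*(x+s)+b), Some (a^2*(x+s)+2*a*b+c))"])
          (rule labP, rule onP, auto simp: N1_def q)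
    qed
  qed
qed


lemma memL: "u = a*t+b \<Longrightarrow> v = a^2*t+2*a*b+c \<Longrightarrow> (Some t, Some u, Some v) \<in> N1 (Some a, Some b, Some (c::'a::{finite,field}))"
  by (simp add: N1_def)

lemma exist_PM:
  fixes x y z b c :: "'a::{finite,field}"
  assumes np: "(Some x, Some y, Some z) \<notin> N1 (None, Some b, Some c)"
  shows "\<exists>m p'. m \<in> labels \<and> (Some x, Some y, Some z) \<in> N1 m \<and> p' \<in> N1 m \<and> p' \<in> N1 (None, Some b, Some c)"
proof (cases "c = x")
  case True
  then show ?thesis
    by (intro wit[of "(None, Some y, Some x)" _ "(None, None, Some x)"]) (auto simp: labP N1_def)
next
  case False
  define a' where "a' = (b-y)/(c-x)"
  have h: "a'*(c-x) = b-y" unfolding a'_def using False by simp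
  have m: "(Some c, Some b, Some (a'^2*(c-x)+z)) \<in> N1 (Some a', Some (y-a'*x), Some (z+a'^2*x-2*a'*y))"
    apply (rule memL) using h apply algebra apply (simp add: algebra_simps power2_eq_square) done
  show ?thesis
    by (intro wit[of "(Some a', Some (y-a'*x), Some (z+a'^2*x-2*a'*y))" _ "(Some c, Some b, Some (a'^2*(c-x)+z))"])
      (rule labP, rule onP, rule m, auto simp: N1_def)
qed

lemma exist_QL:
  fixes y z a b c :: "'a::{finite,field}"
  assumes np: "(None, Some y, Some z) \<notin> N1 (Some a, Some b, Some c)"
  shows "\<exists>m p'. m \<in> labels \<and> (None, Some y, Some z) \<in> N1 m \<and> p' \<in> N1 m \<and> p' \<in> N1 (Some a, Some b, Some c)"
proof (cases "y = a")
  case True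
  then show ?thesis
    by (intro wit[of "(None, None, Some y)" _ "(None, Some a, Some c)"]) (auto simp: labP N1_def)
next
  case False
  define d where "d = a - y"
  have d: "d \<noteq> 0" using False unfolding d_def by simp
  define t where "t = -(2*b*d+c-z)/d^2"
  have h: "d^2*t = -(2*b*d+c-z)" unfolding t_def using d by simp
  have m: "(Some t, Some (a*t+b), Some (a^2*t+2*a*b+c)) \<in> N1 (Some y, Some (d*t+b), Some z)"
    by (rule memL) (use h in \<open>unfold d_def, algebra\<close>)+
  show ?thesis
    by (intro wit[of "(Some y, Some (d*t+b), Some z)" _ "(Some t, Some (a*t+b), Some (a^2*t+2*a*b+c))"])
      (rule labP, simp add: N1_def, rule m, auto simp: N1_def)
qed

lemma exist:
  fixes p l :: "('a::{finite,field}) label"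
  assumes pl: "p \<in> labels" "l \<in> labels" and np: "p \<notin> N1 l"
  shows "\<exists>m p'. m \<in> labels \<and> p \<in> N1 m \<and> p' \<in> N1 m \<and> p' \<in> N1 l"
  using pl(1)
proof (cases rule: labels_cases)
  case pP: (P x y z)
  from pl(2) show ?thesis
  proof (cases rule: labels_cases)
    case (P a b c) then show ?thesis using exist_PL np pP by blast
  next
    case (Q b c) then show ?thesis using exist_PM np pP by blast
  next
    case (R a) then show ?thesis unfolding pP
      by (intro wit[of "(Some a, Some (y-a*x), Some (z+a^2*x-2*a*y))" _ "(None, Some a, Some (z+a^2*x-2*a*y))"])
        (rule labP, rule onP, auto simp: N1_def)
  next
    case Rinf then show ?thesis unfolding pP
      by (intro wit[of "(None, Some y, Some x)" _ "(None, None, Some x)"]) (auto simp: labP N1_def)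
  qed
next
  case pQ: (Q y z)
  from pl(2) show ?thesis
  proof (cases rule: labels_cases)
    case (P a b c) then show ?thesis using exist_QL np pQ by blast
  next
    case (Q b c) then show ?thesis unfolding pQ
      by (intro wit[of "(Some y, Some (b - y*c), Some z)" _ "(Some c, Some b, Some (y^2*c+2*y*(b-y*c)+z))"])
        (auto simp: labP N1_def)
  next
    case (R a) then show ?thesis using np unfolding pQ
      by (intro wit[of "(None, None, Some y)" _ "(None, None, None)"]) (auto simp: labP N1_def)
  next
    case Rinf then show ?thesis unfolding pQ
      by (intro wit[of "(None, None, Some y)" _ "(None, None, None)"]) (auto simp: labP N1_def)
  qed
next
  case pR: (R z)
  from pl(2) show ?thesis
  proof (cases rule: labels_cases)
    case (P a b c) then show ?thesis unfolding pR
      by (intro wit[of "(None, Some (a*z+b), Some z)" _ "(Some z, Some (a*z+b), Some (a^2*z+2*a*b+c))"])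
        (auto simp: labP N1_def)
  next
    case (Q b c) then show ?thesis using np unfolding pR
      by (intro wit[of "(None, None, None)" _ "(None, None, Some c)"]) (auto simp: labP N1_def)
  next
    case (R a) then show ?thesis unfolding pR
      by (intro wit[of "(None, None, None)" _ "(None, None, None)"]) (auto simp: labP N1_def)
  next
    case Rinf then show ?thesis using np unfolding pR by (auto simp: N1_def)
  qed
next
  case pRi: Rinf
  from pl(2) show ?thesis
  proof (cases rule: labels_cases)
    case (P a b c) then show ?thesis unfolding pRi
      by (intro wit[of "(None, None, Some a)" _ "(None, Some a, Some c)"]) (auto simp: labP N1_def)
  next
    case (Q b c) then show ?thesis unfolding pRi
      by (intro wit[of "(None, None, None)" _ "(None, None, Some c)"]) (auto simp: labP N1_def)
  qed (use np pRi in \<open>auto simp: N1_def\<close>)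
qed


lemma unique:
  fixes p l :: "('a::{finite,field}) label"
  assumes l: "l \<in> labels" and p: "p \<in> labels" "p \<notin> N1 l"
    and h1: "m1 \<in> labels" "p \<in> N1 m1" "p1 \<in> N1 m1" "p1 \<in> N1 l"
    and h2: "m2 \<in> labels" "p \<in> N1 m2" "p2 \<in> N1 m2" "p2 \<in> N1 l"
  shows "m1 = m2 \<and> p1 = p2"
proof -
  let ?q = "card (UNIV :: 'a set)"
  define T where "T = Sigma (N1 l) (\<lambda>p'. Sigma (LT p' - {l}) (\<lambda>m. N1 m - {p'}))"
  define f where "f = (\<lambda>(t::'a label \<times> 'a label \<times> 'a label). snd (snd t))"
  have finT: "finite T" by simp
  have cT: "card T = Suc ?q * (?q * ?q)"
  proof -
    have "card T = (\<Sum>p'\<in>N1 l. card (Sigma (LT p' - {l}) (\<lambda>m. N1 m - {p'})))"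
      unfolding T_def by (rule card_SigmaI) auto
    also have "\<dots> = (\<Sum>p'\<in>N1 l. ?q * ?q)"
    proof (rule sum.cong)
      fix p' assume p': "p' \<in> N1 l"
      then have p'l: "p' \<in> labels" using N1_sub l by blast
      have "l \<in> LT p'" using p' l unfolding LT_def by blast
      then have c1: "card (LT p' - {l}) = ?q" using card_LT[OF p'l] by simp
      have "card (Sigma (LT p' - {l}) (\<lambda>m. N1 m - {p'})) = (\<Sum>m\<in>LT p' - {l}. card (N1 m - {p'}))"
        by (rule card_SigmaI) auto
      also have "\<dots> = (\<Sum>m\<in>LT p' - {l}. ?q)"
      proof (rule sum.cong)
        fix m assume "m \<in> LT p' - {l}"
        then have "m \<in> labels" "p' \<in> N1 m" unfolding LT_def by auto
        then show "card (N1 m - {p'}) = ?q" using card_N1[of m] by simp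
      qed simp
      also have "\<dots> = ?q * ?q" using c1 by simp
      finally show "card (Sigma (LT p' - {l}) (\<lambda>m. N1 m - {p'})) = ?q * ?q" .
    qed simp
    also have "\<dots> = Suc ?q * (?q * ?q)" using card_N1[OF l] by simp
    finally show ?thesis .
  qed
  have img: "f ` T = labels - N1 l"
  proof (rule set_eqI, rule iffI)
    fix x assume "x \<in> f ` T"
    then obtain t where t0: "t \<in> T" "x = f t" by blast
    obtain p' m y where ty: "t = (p', m, y)" by (cases t) blast
    have "p' \<in> N1 l \<and> m \<in> LT p' \<and> m \<noteq> l \<and> x \<in> N1 m \<and> x \<noteq> p'"
      using t0 unfolding ty T_def f_def by simp
    then have t: "p' \<in> N1 l" "m \<in> LT p'" "m \<noteq> l" "x \<in> N1 m" "x \<noteq> p'" by blast+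
    then have m: "m \<in> labels" "p' \<in> N1 m" unfolding LT_def by auto
    have "x \<in> labels" using N1_sub[OF m(1)] t(4) by blast
    moreover have "x \<notin> N1 l"
    proof
      assume "x \<in> N1 l"
      then have "x = p'" using lines_meet[OF m(1) l t(3) t(4) _ m(2) t(1)] by blast
      then show False using t(5) by simp
    qed
    ultimately show "x \<in> labels - N1 l" by simp
  next
    fix x assume x: "x \<in> labels - N1 l"
    then obtain m p' where mp: "m \<in> labels" "x \<in> N1 m" "p' \<in> N1 m" "p' \<in> N1 l"
      using exist[OF _ l] by blast
    have "m \<noteq> l" using mp(2) x by auto
    moreover have "x \<noteq> p'" using mp(4) x by auto
    ultimately have "(p', m, x) \<in> T" unfolding T_def LT_def using mp x by simp
    moreover have "x = f (p', m, x)" unfolding f_def by simp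
    ultimately show "x \<in> f ` T" by blast
  qed
  have "card (labels - N1 l) = card (labels :: 'a label set) - card (N1 l)"
    using N1_sub[OF l] by (simp add: card_Diff_subset)
  then have "card (f ` T) = card T" unfolding img cT card_labels card_N1[OF l] by simp
  then have inj: "inj_on f T" using finT inj_on_iff_eq_card by blast
  have "m1 \<noteq> l" "m2 \<noteq> l" using h1 h2 p by auto
  moreover have "p \<noteq> p1" "p \<noteq> p2" using h1 h2 p by auto
  ultimately have "(p1, m1, p) \<in> T" "(p2, m2, p) \<in> T" unfolding T_def LT_def using h1 h2 by simp_all
  moreover have "f (p1, m1, p) = f (p2, m2, p)" unfolding f_def by simp
  ultimately have "(p1, m1, p) = (p2, m2, p)" using inj unfolding inj_on_def by blast
  then show ?thesis by simp
qed


lemma gadj_iff: "gadj u v \<longleftrightarrow>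
   (snd u \<and> \<not> snd v \<and> fst u \<in> labels \<and> fst v \<in> N1 (fst u)) \<or>
   (snd v \<and> \<not> snd u \<and> fst v \<in> labels \<and> fst u \<in> N1 (fst v))"
  unfolding gadj_def gverts_def using N1_sub by (cases u; cases v) auto

lemma gq_conc: "gq (gverts :: ('a::{finite,field}) gvertex set) gadj snd (card (UNIV :: 'a set))"
proof
  show "finite (gverts :: 'a gvertex set)" by simp
next
  fix u v :: "'a gvertex" assume "gadj u v" then show "u \<in> gverts \<and> v \<in> gverts" unfolding gadj_def by simp
next
  fix u v :: "'a gvertex" assume "gadj u v" then show "gadj v u" unfolding gadj_def by auto
next
  fix u v :: "'a gvertex" assume "gadj u v" then show "snd u \<noteq> snd v" unfolding gadj_def by auto
next
  fix u :: "'a gvertex" assume u: "u \<in> gverts"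
  obtain l b where ub: "u = (l, b)" by (cases u)
  have l: "l \<in> labels" using u ub unfolding gverts_def by simp
  show "card {v. gadj u v} = Suc (card (UNIV :: 'a set))"
  proof (cases b)
    case True
    have "{v. gadj u v} = (\<lambda>p. (p, False)) ` N1 l"
    proof (rule set_eqI)
      fix v :: "'a gvertex" show "v \<in> {v. gadj u v} \<longleftrightarrow> v \<in> (\<lambda>p. (p, False)) ` N1 l"
        by (cases v) (auto simp: gadj_iff ub True l)
    qed
    then show ?thesis using card_N1[OF l] by (simp add: card_image inj_on_def)
  next
    case False
    have "{v. gadj u v} = (\<lambda>m. (m, True)) ` LT l"
    proof (rule set_eqI)
      fix v :: "'a gvertex" show "v \<in> {v. gadj u v} \<longleftrightarrow> v \<in> (\<lambda>m. (m, True)) ` LT l"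
        by (cases v) (auto simp: gadj_iff ub False l LT_def)
    qed
    then show ?thesis using card_LT[OF l] by (simp add: card_image inj_on_def)
  qed
next
  fix u w1 v w2 :: "'a gvertex"
  assume e: "gadj u w1" "gadj w1 v" "gadj u w2" "gadj w2 v" "u \<noteq> v"
  show "w1 = w2"
  proof (cases "snd u")
    case True
    then have s: "\<not> snd w1" "\<not> snd w2" "snd v" "fst u \<noteq> fst v" "fst u \<in> labels" "fst v \<in> labels"
      "fst w1 \<in> N1 (fst u)" "fst w1 \<in> N1 (fst v)" "fst w2 \<in> N1 (fst u)" "fst w2 \<in> N1 (fst v)"
      using e unfolding gadj_iff by (auto simp: prod_eq_iff)
    then have "fst w1 = fst w2" using lines_meet[of "fst u" "fst v"] by blast
    then show ?thesis using s by (simp add: prod_eq_iff)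
  next
    case False
    then have s: "snd w1" "snd w2" "\<not> snd v" "fst u \<noteq> fst v" "fst w1 \<in> labels" "fst w2 \<in> labels"
      "fst u \<in> N1 (fst w1)" "fst v \<in> N1 (fst w1)" "fst u \<in> N1 (fst w2)" "fst v \<in> N1 (fst w2)"
      using e unfolding gadj_iff by (auto simp: prod_eq_iff)
    have "fst w1 = fst w2"
    proof (rule ccontr)
      assume "fst w1 \<noteq> fst w2"
      then have "fst u = fst v" using lines_meet[of "fst w1" "fst w2"] s by blast
      then show False using s by simp
    qed
    then show ?thesis using s by (simp add: prod_eq_iff)
  qed
next
  fix u v :: "'a gvertex"
  assume uv: "u \<in> gverts" "v \<in> gverts" "snd u \<noteq> snd v" "\<not> gadj u v"
  obtain lu su where ub: "u = (lu, su)" by (cases u)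
  obtain lv sv where vb: "v = (lv, sv)" by (cases v)
  have lab: "lu \<in> labels" "lv \<in> labels" using uv ub vb unfolding gverts_def by auto
  show "\<exists>!p. gadj u (fst p) \<and> gadj (fst p) (snd p) \<and> gadj (snd p) v"
  proof (cases su)
    case False
    then have sv: sv using uv ub vb by simp
    have np: "lu \<notin> N1 lv" using uv(4) lab False sv unfolding ub vb gadj_iff by simp
    obtain m p' where mp: "m \<in> labels" "lu \<in> N1 m" "p' \<in> N1 m" "p' \<in> N1 lv"
      using exist[OF lab(1) lab(2) np] by blast
    show ?thesis
    proof (rule ex1I[of _ "((m, True), (p', False))"])
      show "gadj u (fst ((m, True), (p', False))) \<and> gadj (fst ((m, True), (p', False))) (snd ((m, True), (p', False)))
          \<and> gadj (snd ((m, True), (p', False))) v"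
        using mp lab sv False unfolding ub vb gadj_iff by simp
    next
      fix w assume w: "gadj u (fst w) \<and> gadj (fst w) (snd w) \<and> gadj (snd w) v"
      obtain m1 s1 p1 s2 where wb: "w = ((m1, s1), (p1, s2))" by (metis prod.collapse)
      have "s1" "\<not> s2" "m1 \<in> labels" "lu \<in> N1 m1" "p1 \<in> N1 m1" "p1 \<in> N1 lv"
        using w lab sv False unfolding ub vb wb gadj_iff by auto
      then have "m1 = m \<and> p1 = p'" using unique[OF lab(2) lab(1) np _ _ _ _ mp] by blast
      then show "w = ((m, True), (p', False))" using wb \<open>s1\<close> \<open>\<not> s2\<close> by simp
    qed
  next
    case True
    then have sv: "\<not> sv" using uv ub vb by simp
    have np: "lv \<notin> N1 lu" using uv(4) lab True sv unfolding ub vb gadj_iff by simp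
    obtain m p' where mp: "m \<in> labels" "lv \<in> N1 m" "p' \<in> N1 m" "p' \<in> N1 lu"
      using exist[OF lab(2) lab(1) np] by blast
    show ?thesis
    proof (rule ex1I[of _ "((p', False), (m, True))"])
      show "gadj u (fst ((p', False), (m, True))) \<and> gadj (fst ((p', False), (m, True))) (snd ((p', False), (m, True)))
          \<and> gadj (snd ((p', False), (m, True))) v"
        using mp lab sv True unfolding ub vb gadj_iff by simp
    next
      fix w assume w: "gadj u (fst w) \<and> gadj (fst w) (snd w) \<and> gadj (snd w) v"
      obtain p1 s1 m1 s2 where wb: "w = ((p1, s1), (m1, s2))" by (metis prod.collapse)
      have "\<not> s1" "s2" "m1 \<in> labels" "lv \<in> N1 m1" "p1 \<in> N1 m1" "p1 \<in> N1 lu"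
        using w lab sv True unfolding ub vb wb gadj_iff by auto
      then have "m1 = m \<and> p1 = p'" using unique[OF lab(1) lab(2) np _ _ _ _ mp] by blast
      then show "w = ((p', False), (m, True))" using wb \<open>\<not> s1\<close> \<open>s2\<close> by simp
    qed
  qed
qed

theorem theorem2:
  fixes \<alpha> \<beta> :: "('a::{finite,field}) gvertex"
  assumes "\<alpha> \<in> gverts" and "\<beta> \<in> gverts"
    and "gdist gverts gadj \<alpha> \<beta> = 3"
  shows "perfect_dominating gverts gadj
           (closed_nbhd gverts gadj 2 \<alpha> \<union> closed_nbhd gverts gadj 2 \<beta>)
       \<and> card (closed_nbhd gverts gadj 2 \<alpha> \<union> closed_nbhd gverts gadj 2 \<beta>)
           = 2 * (card (UNIV :: 'a set) + 1)^2"
  using gq.main[OF gq_conc assms] by simp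


end
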